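(* A reaction network $(X,\mathscr{R})$ admits a sum formula realization if and only if it is conservative.
   Context: A reaction network (RN) $(X,\mathscr{R})$ consists of a finite non-empty set $X$ of species and a finite non-empty set $\mathscr{R}$ of reactions. Each reaction $r$ is given by stoichiometric coefficients $s^-_{xr},s^+_{xr}\in\mathbb{N}_0$. The stoichiometric matrix $S\in\mathbb{Z}^{X\times\mathscr{R}}$ has entries $S_{xr}=s^+_{xr}-s^-_{xr}$. The paper assumes throughout that RNs are closed: every reaction $r$ has $x,y$ with $S_{xr}<0<S_{yr}$. The RN is conservative if there is $m\in\mathbb{R}^X$ with all entries positive and $m^\top S=0$. A sum formula realization (sf-realization) is a matrix $A\in\mathbb{N}_0^{\mathcal{A}\times X}$, for some non-empty finite set $\mathcal{A}$ of "atoms", such that: - (i) every column of $A$ is nonzero; - (ii) $\operatorname{im}A^\top=\ker S^\top$ as subspaces of $\mathbb{R}^X$. *)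

theory Defs
  imports Complex_Main
begin

text \<open>A reaction network: species form the finite type 'x (X = UNIV, nonempty automatically),
reactions form the finite type 'r. smin x r and splus x r are the stoichiometric
coefficients s^-_{xr}, s^+_{xr} in N_0.\<close>

definition stoich :: "('x \<Rightarrow> 'r \<Rightarrow> nat) \<Rightarrow> ('x \<Rightarrow> 'r \<Rightarrow> nat) \<Rightarrow> 'x \<Rightarrow> 'r \<Rightarrow> int" where
  "stoich smin splus x r = int (splus x r) - int (smin x r)"

definition closed_RN :: "('x \<Rightarrow> 'r \<Rightarrow> nat) \<Rightarrow> ('x \<Rightarrow> 'r \<Rightarrow> nat) \<Rightarrow> bool" where
  "closed_RN smin splus \<longleftrightarrow>
     (\<forall>r. \<exists>x y. stoich smin splus x r < 0 \<and> 0 < stoich smin splus y r)"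

definition kerST :: "('x::finite \<Rightarrow> 'r \<Rightarrow> nat) \<Rightarrow> ('x \<Rightarrow> 'r \<Rightarrow> nat) \<Rightarrow> ('x \<Rightarrow> real) set" where
  "kerST smin splus = {v. \<forall>r. (\<Sum>x\<in>UNIV. v x * real_of_int (stoich smin splus x r)) = 0}"

definition conservative :: "('x::finite \<Rightarrow> 'r \<Rightarrow> nat) \<Rightarrow> ('x \<Rightarrow> 'r \<Rightarrow> nat) \<Rightarrow> bool" where
  "conservative smin splus \<longleftrightarrow>
     (\<exists>m :: 'x \<Rightarrow> real. (\<forall>x. 0 < m x) \<and> m \<in> kerST smin splus)"

definition imAT :: "nat set \<Rightarrow> (nat \<Rightarrow> 'x \<Rightarrow> nat) \<Rightarrow> ('x \<Rightarrow> real) set" where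
  "imAT Atoms A = {v. \<exists>c :: nat \<Rightarrow> real. v = (\<lambda>x. \<Sum>a\<in>Atoms. c a * real (A a x))}"

definition sf_realization ::
  "('x::finite \<Rightarrow> 'r \<Rightarrow> nat) \<Rightarrow> ('x \<Rightarrow> 'r \<Rightarrow> nat) \<Rightarrow> nat set \<Rightarrow> (nat \<Rightarrow> 'x \<Rightarrow> nat) \<Rightarrow> bool" where
  "sf_realization smin splus Atoms A \<longleftrightarrow>
     finite Atoms \<and> Atoms \<noteq> {} \<and>
     (\<forall>x. \<exists>a\<in>Atoms. A a x \<noteq> 0) \<and>
     imAT Atoms A = kerST smin splus"

definition admits_sf_realization :: "('x::finite \<Rightarrow> 'r \<Rightarrow> nat) \<Rightarrow> ('x \<Rightarrow> 'r \<Rightarrow> nat) \<Rightarrow> bool" where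
  "admits_sf_realization smin splus \<longleftrightarrow> (\<exists>Atoms A. sf_realization smin splus Atoms A)"

end

theory Submission imports Defs begin

definition lspan :: "('x \<Rightarrow> int) list \<Rightarrow> ('x \<Rightarrow> real) set" where
  "lspan L = {v. \<exists>c. v = (\<lambda>x. \<Sum>i<length L. c i * real_of_int ((L!i) x))}"

definition rvec :: "('x \<Rightarrow> int) \<Rightarrow> ('x \<Rightarrow> real)" where
  "rvec u = (\<lambda>x. real_of_int (u x))"

lemma lspan_nth: "i < length L \<Longrightarrow> rvec (L!i) \<in> lspan L"
  unfolding lspan_def rvec_def
proof (intro CollectI exI[of _ "\<lambda>k. if k = i then 1 else 0"] ext)
  fix x assume "i < length L"
  then show "real_of_int ((L!i) x) = (\<Sum>k<length L. (if k = i then 1 else 0) * real_of_int ((L!k) x))"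
    by (simp add: if_distrib[of "\<lambda>a. a * _"] sum.delta cong: if_cong)
qed

lemma lspan_lin:
  assumes "v \<in> lspan L" "w \<in> lspan L"
  shows "(\<lambda>x. a * v x + b * w x) \<in> lspan L"
proof -
  obtain c where c: "v = (\<lambda>x. \<Sum>i<length L. c i * real_of_int ((L!i) x))" using assms(1) unfolding lspan_def by auto
  obtain d where d: "w = (\<lambda>x. \<Sum>i<length L. d i * real_of_int ((L!i) x))" using assms(2) unfolding lspan_def by auto
  show ?thesis unfolding lspan_def
    by (intro CollectI exI[of _ "\<lambda>i. a * c i + b * d i"])
       (simp add: c d sum_distrib_left sum.distrib algebra_simps)
qed

lemma lspan_mono:
  assumes "\<forall>j<length L'. rvec (L'!j) \<in> lspan L"
  shows "lspan L' \<subseteq> lspan L"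
proof
  fix v assume "v \<in> lspan L'"
  then obtain c where c: "v = (\<lambda>x. \<Sum>j<length L'. c j * real_of_int ((L'!j) x))" unfolding lspan_def by auto
  have "\<forall>j. \<exists>d. j < length L' \<longrightarrow> rvec (L'!j) = (\<lambda>x. \<Sum>i<length L. d i * real_of_int ((L!i) x))"
    using assms unfolding lspan_def by auto
  then obtain D where D: "\<And>j. j < length L' \<Longrightarrow> rvec (L'!j) = (\<lambda>x. \<Sum>i<length L. D j i * real_of_int ((L!i) x))"
    by metis
  have "v = (\<lambda>x. \<Sum>i<length L. (\<Sum>j<length L'. c j * D j i) * real_of_int ((L!i) x))"
  proof
    fix x
    have "v x = (\<Sum>j<length L'. c j * rvec (L'!j) x)" by (simp add: c rvec_def)
    also have "\<dots> = (\<Sum>j<length L'. c j * (\<Sum>i<length L. D j i * real_of_int ((L!i) x)))"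
      by (intro sum.cong refl) (simp add: D)
    also have "\<dots> = (\<Sum>i<length L. (\<Sum>j<length L'. c j * D j i) * real_of_int ((L!i) x))"
      by (simp add: sum_distrib_left sum_distrib_right mult.assoc sum.swap[of _ "{..<length L'}"])
    finally show "v x = \<dots>" .
  qed
  then show "v \<in> lspan L" unfolding lspan_def by (intro CollectI exI[of _ "\<lambda>i. \<Sum>j<length L'. c j * D j i"])
qed

definition idot :: "('x::finite \<Rightarrow> int) \<Rightarrow> ('x \<Rightarrow> int) \<Rightarrow> int" where
  "idot u s = (\<Sum>x\<in>UNIV. u x * s x)"

definition rdot :: "('x::finite \<Rightarrow> real) \<Rightarrow> ('x \<Rightarrow> int) \<Rightarrow> real" where
  "rdot v s = (\<Sum>x\<in>UNIV. v x * real_of_int (s x))"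

lemma rdot_lspan:
  "rdot (\<lambda>x. \<Sum>i<n. c i * real_of_int ((L!i) x)) s = (\<Sum>i<n. c i * real_of_int (idot (L!i) s))"
  unfolding rdot_def idot_def
  by (simp add: sum_distrib_left sum_distrib_right mult.assoc sum.swap[of _ UNIV])


lemma lspan_hyper:
  fixes L :: "('x::finite \<Rightarrow> int) list"
  shows "\<exists>L'. lspan L' = lspan L \<inter> {v. rdot v s = 0}"
proof (cases "\<forall>i<length L. idot (L!i) s = 0")
  case True
  have "lspan L \<subseteq> {v. rdot v s = 0}"
  proof
    fix v assume "v \<in> lspan L"
    then obtain c where c: "v = (\<lambda>x. \<Sum>i<length L. c i * real_of_int ((L!i) x))" unfolding lspan_def by auto
    show "v \<in> {v. rdot v s = 0}" using True by (simp add: c rdot_lspan)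
  qed
  then show ?thesis by blast
next
  case False
  then obtain j where j: "j < length L" "idot (L!j) s \<noteq> 0" by auto
  define d where "d = idot (L!j) s"
  define L' where "L' = map (\<lambda>u x. d * u x - idot u s * (L!j) x) L"
  have len: "length L' = length L" by (simp add: L'_def)
  have nth': "\<And>i. i < length L \<Longrightarrow> L'!i = (\<lambda>x. d * (L!i) x - idot (L!i) s * (L!j) x)"
    by (simp add: L'_def)
  have idot0: "idot (L'!i) s = 0" if "i < length L" for i
  proof -
    have "idot (L'!i) s = d * idot (L!i) s - idot (L!i) s * idot (L!j) s"
      using that by (simp add: nth' idot_def sum_subtractf sum_distrib_left algebra_simps)
    then show ?thesis by (simp add: d_def)
  qed
  have "lspan L' \<subseteq> lspan L"
  proof (rule lspan_mono, intro allI impI)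
    fix i assume "i < length L'"
    then have i: "i < length L" by (simp add: len)
    have "(\<lambda>x. real_of_int d * rvec (L!i) x + (- real_of_int (idot (L!i) s)) * rvec (L!j) x) \<in> lspan L"
      by (intro lspan_lin lspan_nth i j)
    also have "(\<lambda>x. real_of_int d * rvec (L!i) x + (- real_of_int (idot (L!i) s)) * rvec (L!j) x) = rvec (L'!i)"
      by (simp add: nth' i rvec_def)
    finally show "rvec (L'!i) \<in> lspan L" .
  qed
  moreover have "lspan L' \<subseteq> {v. rdot v s = 0}"
  proof
    fix v assume "v \<in> lspan L'"
    then obtain c where c: "v = (\<lambda>x. \<Sum>i<length L'. c i * real_of_int ((L'!i) x))" unfolding lspan_def by auto
    show "v \<in> {v. rdot v s = 0}" using idot0 by (simp add: c rdot_lspan len)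
  qed
  moreover have "lspan L \<inter> {v. rdot v s = 0} \<subseteq> lspan L'"
  proof
    fix v assume v: "v \<in> lspan L \<inter> {v. rdot v s = 0}"
    then obtain c where c: "v = (\<lambda>x. \<Sum>i<length L. c i * real_of_int ((L!i) x))" unfolding lspan_def by auto
    have E: "(\<Sum>i<length L. c i * real_of_int (idot (L!i) s)) = 0" using v by (simp add: c rdot_lspan)
    have dn: "real_of_int d \<noteq> 0" using j d_def by simp
    have "v = (\<lambda>x. \<Sum>i<length L'. (c i / real_of_int d) * real_of_int ((L'!i) x))"
    proof
      fix x
      have "(\<Sum>i<length L'. (c i / real_of_int d) * real_of_int ((L'!i) x))
          = (\<Sum>i<length L. c i * real_of_int ((L!i) x) - (c i * real_of_int (idot (L!i) s)) * (real_of_int ((L!j) x) / real_of_int d))"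
        using dn by (intro sum.cong) (auto simp: len nth' field_simps)
      also have "\<dots> = v x - (\<Sum>i<length L. c i * real_of_int (idot (L!i) s)) * (real_of_int ((L!j) x) / real_of_int d)"
        by (simp add: sum_subtractf sum_distrib_right sum_divide_distrib c)
      also have "\<dots> = v x" by (simp add: E)
      finally show "v x = (\<Sum>i<length L'. (c i / real_of_int d) * real_of_int ((L'!i) x))" by simp
    qed
    then show "v \<in> lspan L'" unfolding lspan_def by (intro CollectI exI[of _ "\<lambda>i. c i / real_of_int d"])
  qed
  ultimately show ?thesis by blast
qed

lemma lspan_univ: "\<exists>L::('x::finite \<Rightarrow> int) list. lspan L = UNIV"
proof -
  obtain xs :: "'x list" where xs: "set xs = UNIV" "distinct xs" using finite_distinct_list[of "UNIV::'x set"] by auto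
  define L :: "('x \<Rightarrow> int) list" where "L = map (\<lambda>y x. if x = y then 1 else 0) xs"
  have bij: "bij_betw ((!) xs) {..<length xs} UNIV"
    using bij_betw_nth[OF xs(2) refl refl] xs(1) by simp
  have "v \<in> lspan L" for v :: "'x \<Rightarrow> real"
  proof -
    have "v = (\<lambda>x. \<Sum>i<length L. v (xs!i) * real_of_int ((L!i) x))"
    proof
      fix x
      define g where "g y = (if x = y then v y else 0)" for y
      have "(\<Sum>i<length L. v (xs!i) * real_of_int ((L!i) x)) = (\<Sum>i\<in>{..<length xs}. g (xs!i))"
        by (intro sum.cong) (auto simp: L_def g_def)
      also have "\<dots> = (\<Sum>y\<in>UNIV. g y)"
        by (rule sum.reindex_bij_betw[OF bij])
      also have "\<dots> = v x" unfolding g_def by simp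
      finally show "v x = (\<Sum>i<length L. v (xs!i) * real_of_int ((L!i) x))" by simp
    qed
    then show ?thesis unfolding lspan_def by (intro CollectI exI[of _ "\<lambda>i. v (xs!i)"])
  qed
  then show ?thesis by blast
qed

lemma lspan_ker:
  fixes S :: "'r \<Rightarrow> 'x::finite \<Rightarrow> int"
  assumes "finite R"
  shows "\<exists>L. lspan L = {v. \<forall>r\<in>R. rdot v (S r) = 0}"
  using assms
proof (induction R rule: finite_induct)
  case empty
  then show ?case using lspan_univ by simp
next
  case (insert r R)
  then obtain L where L: "lspan L = {v. \<forall>r\<in>R. rdot v (S r) = 0}" by blast
  obtain L' where "lspan L' = lspan L \<inter> {v. rdot v (S r) = 0}" using lspan_hyper by blast
  then show ?case using L by auto
qed


lemma kerST_eq: "kerST smin splus = {v. \<forall>r\<in>UNIV. rdot v (\<lambda>x. stoich smin splus x r) = 0}"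
  unfolding kerST_def rdot_def by simp

lemma pos_vec:
  fixes L :: "('x::finite \<Rightarrow> int) list" and m :: "'x \<Rightarrow> real"
  assumes m: "m \<in> lspan L" and pos: "\<And>x. 0 < m x"
  shows "\<exists>p. rvec p \<in> lspan L \<and> (\<forall>x. 0 < p x)"
proof -
  obtain c where c: "m = (\<lambda>x. \<Sum>i<length L. c i * real_of_int ((L!i) x))" using m unfolding lspan_def by auto
  define \<delta> where "\<delta> = Min (range m)"
  have dpos: "\<delta> > 0" unfolding \<delta>_def using pos by (subst Min_gr_iff) auto
  have dle: "\<delta> \<le> m x" for x unfolding \<delta>_def by (rule Min_le) auto
  define B where "B x = (\<Sum>i<length L. \<bar>real_of_int ((L!i) x)\<bar>)" for x
  define T where "T = (\<Sum>x\<in>UNIV. B x)"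
  have BT: "B x \<le> T" for x unfolding T_def
    by (rule member_le_sum) (auto simp: B_def intro: sum_nonneg)
  have T0: "T \<ge> 0" unfolding T_def B_def by (intro sum_nonneg) auto
  define N :: nat where "N = nat \<lceil>T / \<delta>\<rceil> + 1"
  have "real N > T / \<delta>" unfolding N_def
    using real_nat_ceiling_ge[of "T / \<delta>"] by simp
  then have NT: "real N * \<delta> > T" using dpos by (simp add: field_simps)
  define k where "k i = \<lfloor>real N * c i\<rfloor>" for i
  define p where "p x = (\<Sum>i<length L. k i * (L!i) x)" for x
  have prv: "rvec p = (\<lambda>x. \<Sum>i<length L. real_of_int (k i) * real_of_int ((L!i) x))"
    by (simp add: rvec_def p_def)
  have "rvec p \<in> lspan L" unfolding prv lspan_def by (intro CollectI exI[of _ "\<lambda>i. real_of_int (k i)"]) (rule refl)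
  moreover have "0 < p x" for x
  proof -
    have "real N * m x - real_of_int (p x) = (\<Sum>i<length L. (real N * c i - real_of_int (k i)) * real_of_int ((L!i) x))"
      by (simp add: c p_def sum_distrib_left sum_subtractf algebra_simps)
    also have "\<dots> \<le> B x" unfolding B_def
    proof (rule sum_mono)
      fix i
      have a0: "0 \<le> real N * c i - real_of_int (k i)" "real N * c i - real_of_int (k i) \<le> 1"
        unfolding k_def by linarith+
      show "(real N * c i - real_of_int (k i)) * real_of_int ((L!i) x) \<le> \<bar>real_of_int ((L!i) x)\<bar>"
      proof -
        let ?a = "real N * c i - real_of_int (k i)" and ?l = "real_of_int ((L!i) x)"
        have "?a * ?l \<le> \<bar>?a * ?l\<bar>" by (rule abs_ge_self)
        also have "\<dots> = ?a * \<bar>?l\<bar>" using a0(1) by (simp add: abs_mult)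
        also have "\<dots> \<le> \<bar>?l\<bar>" using a0 by (intro mult_left_le_one_le) auto
        finally show ?thesis .
      qed
    qed
    also have "\<dots> \<le> T" by (rule BT)
    also have "\<dots> < real N * \<delta>" by (rule NT)
    also have "\<dots> \<le> real N * m x" by (intro mult_left_mono dle) auto
    finally show ?thesis by simp
  qed
  ultimately show ?thesis by blast
qed


theorem proposition10:
  fixes smin splus :: "'x::finite \<Rightarrow> 'r::finite \<Rightarrow> nat"
  assumes "closed_RN smin splus"
  shows "admits_sf_realization smin splus \<longleftrightarrow> conservative smin splus"
proof
  assume "admits_sf_realization smin splus"
  then obtain Atoms A where sf: "sf_realization smin splus Atoms A"
    unfolding admits_sf_realization_def by blast
  define m where "m x = (\<Sum>a\<in>Atoms. 1 * real (A a x))" for x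
  have "m \<in> imAT Atoms A" unfolding imAT_def m_def by (intro CollectI exI[of _ "\<lambda>_. 1"]) (rule ext, simp)
  then have "m \<in> kerST smin splus" using sf unfolding sf_realization_def by simp
  moreover have "0 < m x" for x
  proof -
    obtain a where a: "a \<in> Atoms" "A a x \<noteq> 0" using sf unfolding sf_realization_def by blast
    show ?thesis unfolding m_def using sf a
      by (intro sum_pos2[of Atoms a]) (auto simp: sf_realization_def)
  qed
  ultimately show "conservative smin splus" unfolding conservative_def by blast
next
  assume "conservative smin splus"
  then obtain m where mpos: "\<And>x. 0 < m x" and mk: "m \<in> kerST smin splus"
    unfolding conservative_def by blast
  obtain L where L: "lspan L = kerST smin splus"
    using lspan_ker[of "UNIV :: 'r set" "\<lambda>r x. stoich smin splus x r"] by (auto simp: kerST_eq)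
  obtain p where p: "rvec p \<in> lspan L" "\<And>x. 0 < p x" using pos_vec[of m L] mk mpos L by blast
  define t where "t = (\<Sum>i<length L. \<Sum>x\<in>UNIV. \<bar>(L!i) x\<bar>)"
  have tb: "\<bar>(L!i) x\<bar> \<le> t" if "i < length L" for i x
  proof -
    have "\<bar>(L!i) x\<bar> \<le> (\<Sum>x\<in>UNIV. \<bar>(L!i) x\<bar>)" by (rule member_le_sum) auto
    also have "\<dots> \<le> t" unfolding t_def using that
      by (intro member_le_sum[where f = "\<lambda>i. \<Sum>x\<in>UNIV. \<bar>(L!i) x\<bar>"]) (auto intro: sum_nonneg)
    finally show ?thesis .
  qed
  have t0: "0 \<le> t" unfolding t_def by (intro sum_nonneg) auto
  define L' where "L' = p # map (\<lambda>u x. u x + t * p x) L"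
  have nn: "0 \<le> (L'!a) x" if "a < length L'" for a x
  proof (cases a)
    case 0 then show ?thesis using p(2)[of x] by (simp add: L'_def)
  next
    case (Suc i)
    then have i: "i < length L" using that by (simp add: L'_def)
    have "t \<le> t * p x" using t0 p(2)[of x] by (simp add: mult_le_cancel_left1)
    then show ?thesis using tb[OF i, of x] Suc i by (simp add: L'_def)
  qed
  have "lspan L' \<subseteq> lspan L"
  proof (rule lspan_mono, intro allI impI)
    fix a assume a: "a < length L'"
    show "rvec (L'!a) \<in> lspan L"
    proof (cases a)
      case 0 then show ?thesis using p by (simp add: L'_def)
    next
      case (Suc i)
      then have i: "i < length L" using a by (simp add: L'_def)
      have "(\<lambda>x. 1 * rvec (L!i) x + real_of_int t * rvec p x) \<in> lspan L"
        by (intro lspan_lin lspan_nth i p(1))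
      also have "(\<lambda>x. 1 * rvec (L!i) x + real_of_int t * rvec p x) = rvec (L'!a)"
        using Suc i by (simp add: L'_def rvec_def)
      finally show ?thesis .
    qed
  qed
  moreover have "lspan L \<subseteq> lspan L'"
  proof (rule lspan_mono, intro allI impI)
    fix i assume i: "i < length L"
    have "(\<lambda>x. 1 * rvec (L'!Suc i) x + (- real_of_int t) * rvec (L'!0) x) \<in> lspan L'"
      using i by (intro lspan_lin lspan_nth) (auto simp: L'_def)
    also have "(\<lambda>x. 1 * rvec (L'!Suc i) x + (- real_of_int t) * rvec (L'!0) x) = rvec (L!i)"
      using i by (simp add: L'_def rvec_def)
    finally show "rvec (L!i) \<in> lspan L'" .
  qed
  ultimately have LL: "lspan L' = kerST smin splus" using L by blast
  define A where "A a x = nat ((L'!a) x)" for a x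
  have "imAT {..<length L'} A = lspan L'"
  proof -
    have "(\<Sum>a\<in>{..<length L'}. c a * real (A a x)) = (\<Sum>a<length L'. c a * real_of_int ((L'!a) x))" for c x
      by (intro sum.cong refl) (simp add: A_def nn)
    then show ?thesis unfolding imAT_def lspan_def by simp
  qed
  moreover have "\<exists>a\<in>{..<length L'}. A a x \<noteq> 0" for x
    using p(2)[of x] by (intro bexI[of _ 0]) (auto simp: A_def L'_def)
  ultimately have "sf_realization smin splus {..<length L'} A"
    unfolding sf_realization_def using LL by (auto simp: L'_def)
  then show "admits_sf_realization smin splus" unfolding admits_sf_realization_def by blast
qed

end
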